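(* Let $p>1$ and $\lambda_0\in\mathbb{C}$. The map $Q_{\lambda_0}:L^p(F)[t]\to W^{k,p}(E)[t]$ is a right inverse of $P_{\lambda_0}:W^{k,p}(E)[t]\to L^p(F)[t]$, i.e. $P_{\lambda_0}Q_{\lambda_0}=\mathrm{Id}$ on $L^p(F)[t]$.
   Context: $X$ is a compact manifold, $E,F\to X$ Hermitian vector bundles with connections, and $P(D_t)=\sum_{l=0}^kA_{k-l}(x,\partial_x)D_t^l$ a translation-invariant elliptic operator of order $k$ on $\mathbb{R}\times X$ ($D_t=-i\partial_t$), with $P(\lambda)=\sum_lA_{k-l}\lambda^l$ and resolvent $R(\lambda)=P(\lambda)^{-1}:L^p(F)\to W^{k,p}(E)$, meromorphic in $\lambda$. Near $\lambda_0$ write $R(\lambda)=\sum_{m\ge-d(\lambda_0)}R_m(\lambda_0)(\lambda-\lambda_0)^m$, where $d(\lambda_0)$ is the pole order ($0$ if $\lambda_0$ is not a root). $W^{k,p}(E)[t]$ and $L^p(F)[t]$ denote sections over $\mathbb{R}\times X$ polynomial in $t$ with coefficients in these spaces. $P_{\lambda_0}(D_t)=e^{-i\lambda_0t}P(D_t)e^{i\lambda_0t}=\sum_{n\ge0}\frac1{n!}\frac{\partial^nP}{\partial\lambda^n}(\lambda_0)D_t^n$. $D_t^{-1}$ is the endomorphism of $L^p(F)[t]$ sending $\frac{(it)^j}{j!}v$ to $\frac{(it)^{j+1}}{(j+1)!}v$, and $D_t^{m}$ for $m<0$ means $(D_t^{-1})^{-m}$. Define $Q_{\lambda_0}=\sum_{m\ge-d(\lambda_0)}R_m(\lambda_0)D_t^m$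 (a finite sum on each polynomial). *)

theory Defs
  imports "HOL-Analysis.Analysis"
begin

text \<open>
  The distribution has no class of complex normed vector spaces, so we
  introduce one: a real normed vector space with a compatible complex
  scalar multiplication.
\<close>

class complex_normed_vector = real_normed_vector +
  fixes scaleC :: "complex \<Rightarrow> 'a \<Rightarrow> 'a"  (infixr \<open>*\<^sub>C\<close> 75)
  assumes scaleC_add_right: "a *\<^sub>C (x + y) = a *\<^sub>C x + a *\<^sub>C y"
    and scaleC_add_left: "(a + b) *\<^sub>C x = a *\<^sub>C x + b *\<^sub>C x"
    and scaleC_scaleC: "a *\<^sub>C (b *\<^sub>C x) = (a * b) *\<^sub>C x"
    and scaleC_one: "1 *\<^sub>C x = x"
    and scaleR_scaleC: "r *\<^sub>R x = complex_of_real r *\<^sub>C x"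
    and norm_scaleC: "norm (a *\<^sub>C x) = cmod a * norm x"

definition bounded_clinear :: "('a::complex_normed_vector \<Rightarrow> 'b::complex_normed_vector) \<Rightarrow> bool" where
  "bounded_clinear f \<longleftrightarrow> bounded_linear f \<and> (\<forall>a x. f (a *\<^sub>C x) = a *\<^sub>C f x)"

text \<open>
  'v plays the role of W^{k,p}(E), 'w the role of L^p(F).
  An element of V[t] (resp. W[t]) is represented by its coefficient sequence
  c :: nat \<Rightarrow> 'v with finite support, with respect to the basis
  e_j = (i t)^j / j!, i.e. f(t) = sum_j ((i t)^j / j!) c_j.
  In this basis D_t = -i d/dt sends e_j to e_{j-1} (and e_0 to 0),
  and D_t^{-1} sends e_j to e_{j+1}.  Operators on X act coefficientwise.
\<close>

definition Dt :: "(nat \<Rightarrow> 'a) \<Rightarrow> nat \<Rightarrow> 'a" where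
  "Dt c = (\<lambda>j. c (Suc j))"

definition Dt_inv :: "(nat \<Rightarrow> 'a::zero) \<Rightarrow> nat \<Rightarrow> 'a" where
  "Dt_inv c = (\<lambda>j. if j = 0 then 0 else c (j - 1))"

definition Dt_pow :: "int \<Rightarrow> (nat \<Rightarrow> 'a::zero) \<Rightarrow> nat \<Rightarrow> 'a" where
  "Dt_pow m c = (if 0 \<le> m then (Dt ^^ nat m) c else (Dt_inv ^^ nat (- m)) c)"

definition Pop :: "nat \<Rightarrow> (nat \<Rightarrow> 'v \<Rightarrow> 'w::complex_normed_vector) \<Rightarrow> complex \<Rightarrow> 'v \<Rightarrow> 'w" where
  "Pop k A z v = (\<Sum>l\<le>k. z ^ l *\<^sub>C A (k - l) v)"

text \<open>Taylor coefficient (1/n!) d^n P / d\<lambda>^n at z0, written out: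
  sum_l (l choose n) z0^(l-n) A_{k-l}.\<close>
definition Ptaylor :: "nat \<Rightarrow> (nat \<Rightarrow> 'v \<Rightarrow> 'w::complex_normed_vector) \<Rightarrow> complex \<Rightarrow> nat \<Rightarrow> 'v \<Rightarrow> 'w" where
  "Ptaylor k A z0 n v = (\<Sum>l\<le>k. (of_nat (l choose n) * z0 ^ (l - n)) *\<^sub>C A (k - l) v)"

text \<open>P_{z0}(D_t) = sum_n (1/n!) P^{(n)}(z0) D_t^n (terms with n > k vanish).\<close>
definition Pshift :: "nat \<Rightarrow> (nat \<Rightarrow> 'v \<Rightarrow> 'w::complex_normed_vector) \<Rightarrow> complex
    \<Rightarrow> (nat \<Rightarrow> 'v) \<Rightarrow> nat \<Rightarrow> 'w" where
  "Pshift k A z0 u = (\<lambda>j. \<Sum>n\<le>k. Ptaylor k A z0 n ((Dt ^^ n) u j))"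

text \<open>Q_{z0} = sum_{m \<ge> -d} R_m D_t^m, a finite sum on each polynomial
  (only the finitely many m with D_t^m c \<noteq> 0 contribute).\<close>
definition Qop :: "nat \<Rightarrow> (int \<Rightarrow> 'w::zero \<Rightarrow> 'v::comm_monoid_add) \<Rightarrow> (nat \<Rightarrow> 'w) \<Rightarrow> nat \<Rightarrow> 'v" where
  "Qop d Rm c = (\<lambda>j. \<Sum>m\<in>{m. - int d \<le> m \<and> Dt_pow m c \<noteq> (\<lambda>_. 0)}. Rm m (Dt_pow m c j))"

end

theory Submission imports Defs begin

lemma my_norm_sums_le:
  fixes f :: "nat \<Rightarrow> 'a::real_normed_vector"
  assumes "f sums F" "g sums G" "\<And>n. norm (f n) \<le> g n"
  shows "norm F \<le> G"
proof -
  have 1: "(\<lambda>n. norm (\<Sum>i<n. f i)) \<longlonglongrightarrow> norm F"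
    using assms(1) unfolding sums_def by (intro tendsto_norm)
  have 2: "(\<lambda>n. \<Sum>i<n. g i) \<longlonglongrightarrow> G" using assms(2) unfolding sums_def .
  have "\<And>n. norm (\<Sum>i<n. f i) \<le> (\<Sum>i<n. g i)"
    by (rule order_trans[OF norm_sum]) (intro sum_mono assms(3))
  then show ?thesis using 1 2 by (intro tendsto_le[OF _ 2 1]) auto
qed

lemma head_zero:
  fixes b :: "nat \<Rightarrow> 'a::real_normed_vector"
  assumes r: "r > 0" and S: "\<And>x. 0 < x \<Longrightarrow> x < r \<Longrightarrow> (\<lambda>n. x^n *\<^sub>R b n) sums 0"
  shows "b 0 = 0"
proof (rule ccontr)
  assume nz: "b 0 \<noteq> 0"
  define x0 where "x0 = r / 2"
  have x0: "0 < x0" "x0 < r" using r by (auto simp: x0_def)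
  have "summable (\<lambda>n. x0^n *\<^sub>R b n)" using S[OF x0] by (rule sums_summable)
  then have "(\<lambda>n. x0^n *\<^sub>R b n) \<longlonglongrightarrow> 0" by (rule summable_LIMSEQ_zero)
  then have "Bseq (\<lambda>n. x0^n *\<^sub>R b n)" by (intro convergent_imp_Bseq) (auto simp: convergent_def)
  then obtain M where M: "M > 0" "\<And>n. norm (x0^n *\<^sub>R b n) \<le> M" by (auto elim: BseqE)
  define e where "e = norm (b 0)"
  have e: "e > 0" using nz by (simp add: e_def)
  define q where "q = min (1/4) (e / (4*M))"
  have q: "0 < q" "q \<le> 1/4" "q \<le> e / (4*M)" using e M by (auto simp: q_def)
  define x where "x = q * x0"
  have qx: "q * x0 < 1 * x0" using q x0 by (intro mult_strict_right_mono) auto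
  have x1: "0 < x" using q x0 unfolding x_def by simp
  have x2: "x < r" unfolding x_def using qx x0(2) by linarith
  note x = x1 x2
  have s1: "(\<lambda>n. x^(n+1) *\<^sub>R b (n+1)) sums (0 - (\<Sum>i<1. x^i *\<^sub>R b i))"
    using sums_split_initial_segment[OF S[OF x], of 1] by simp
  have s2: "(\<lambda>n. M * q * q^n) sums (M * q * (1 / (1 - q)))"
    using q by (intro sums_mult geometric_sums) auto
  have bd: "norm (x^(n+1) *\<^sub>R b (n+1)) \<le> M * q * q^n" for n
  proof -
    have "norm (x^(n+1) *\<^sub>R b (n+1)) = q^(n+1) * norm (x0^(n+1) *\<^sub>R b (n+1))"
      using q x0 by (simp add: x_def power_mult_distrib)
    also have "\<dots> \<le> q^(n+1) * M" using M(2)[of "n+1"] q by (intro mult_left_mono) auto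
    finally show ?thesis by (simp add: algebra_simps)
  qed
  have "norm (0 - (\<Sum>i<1. x^i *\<^sub>R b i)) \<le> M * q * (1 / (1 - q))"
    by (rule my_norm_sums_le[OF s1 s2 bd])
  then have le: "e \<le> M * q * (1 / (1 - q))" by (simp add: e_def)
  have "M * q * (1 / (1 - q)) \<le> M * q * 2"
    using q M by (intro mult_left_mono) (auto simp: field_simps)
  also have "\<dots> \<le> e / 2" using q M by (simp add: field_simps)
  finally show False using le e by linarith
qed

lemma powser_uniq0:
  fixes a :: "nat \<Rightarrow> 'a::real_normed_vector"
  assumes r: "r > 0" and S: "\<And>x. 0 < x \<Longrightarrow> x < r \<Longrightarrow> (\<lambda>n. x^n *\<^sub>R a n) sums 0"
  shows "a N = 0"
proof (induction N rule: less_induct)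
  case (less N)
  have "(\<lambda>n. x^n *\<^sub>R a (n + N)) sums 0" if x: "0 < x" "x < r" for x
  proof -
    have "(\<lambda>n. x^(n+N) *\<^sub>R a (n+N)) sums (0 - (\<Sum>i<N. x^i *\<^sub>R a i))"
      using sums_split_initial_segment[OF S[OF x]] .
    then have "(\<lambda>n. x^(n+N) *\<^sub>R a (n+N)) sums 0" using less by simp
    then have "(\<lambda>n. inverse (x^N) *\<^sub>R (x^(n+N) *\<^sub>R a (n+N))) sums (inverse (x^N) *\<^sub>R 0)"
      by (rule sums_scaleR_right)
    moreover have "(\<lambda>n. inverse (x^N) *\<^sub>R (x^(n+N) *\<^sub>R a (n+N))) = (\<lambda>n. x^n *\<^sub>R a (n+N))"
      using x by (intro ext) (simp add: power_add)
    ultimately show ?thesis by simp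
  qed
  from head_zero[OF r this] show ?case by simp
qed


lemma scaleC_zero_left [simp]: "(0::complex) *\<^sub>C (x::'a::complex_normed_vector) = 0"
  using scaleR_scaleC[of 0 x] by simp

lemma scaleC_zero_right [simp]: "(a::complex) *\<^sub>C (0::'a::complex_normed_vector) = 0"
  using scaleC_add_right[of a "0::'a" 0] by simp

lemma scaleC_sum_right: "(a::complex) *\<^sub>C sum (f :: _ \<Rightarrow> 'a::complex_normed_vector) S = (\<Sum>x\<in>S. a *\<^sub>C f x)"
  by (induction S rule: infinite_finite_induct) (simp_all add: scaleC_add_right)

lemma scaleC_sum_left: "sum f S *\<^sub>C (v::'a::complex_normed_vector) = (\<Sum>x\<in>S. f x *\<^sub>C v)"
  by (induction S rule: infinite_finite_induct) (simp_all add: scaleC_add_left)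

lemma scaleC_of_real_pow: "(complex_of_real x)^n *\<^sub>C (v::'a::complex_normed_vector) = x^n *\<^sub>R v"
  by (simp add: scaleR_scaleC)

lemma bounded_linear_scaleC: "bounded_linear (\<lambda>x::'a::complex_normed_vector. a *\<^sub>C x)"
proof (rule bounded_linear_intro[where K = "cmod a"])
  fix x y :: 'a and r :: real
  show "a *\<^sub>C (x + y) = a *\<^sub>C x + a *\<^sub>C y" by (rule scaleC_add_right)
  show "a *\<^sub>C (r *\<^sub>R x) = r *\<^sub>R (a *\<^sub>C x)"
    by (simp add: scaleR_scaleC scaleC_scaleC mult.commute)
  show "norm (a *\<^sub>C x) \<le> norm x * cmod a" by (simp add: norm_scaleC mult.commute)
qed

lemma bcl_bl: "bounded_clinear f \<Longrightarrow> bounded_linear f"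
  by (simp add: bounded_clinear_def)

lemma bcl_scaleC: "bounded_clinear f \<Longrightarrow> f (a *\<^sub>C x) = a *\<^sub>C f x"
  by (simp add: bounded_clinear_def)

lemma Ptaylor_bl:
  assumes "\<And>j. bounded_clinear (A j)"
  shows "bounded_linear (Ptaylor k A z0 n)"
  unfolding Ptaylor_def[abs_def]
  by (intro bounded_linear_sum bounded_linear_compose[OF bounded_linear_scaleC] bcl_bl assms)

lemma Ptaylor_scaleC:
  assumes "\<And>j. bounded_clinear (A j)"
  shows "Ptaylor k A z0 n (a *\<^sub>C v) = a *\<^sub>C Ptaylor k A z0 n v"
  unfolding Ptaylor_def
  by (simp add: bcl_scaleC[OF assms] scaleC_sum_right scaleC_scaleC mult.commute)

lemma Pop_expand:
  fixes A :: "nat \<Rightarrow> 'v \<Rightarrow> 'w::complex_normed_vector"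
  shows "Pop k A z v = (\<Sum>n\<le>k. (z - z0)^n *\<^sub>C Ptaylor k A z0 n v)"
proof -
  have "(\<Sum>n\<le>k. (z - z0)^n *\<^sub>C Ptaylor k A z0 n v)
      = (\<Sum>n\<le>k. \<Sum>l\<le>k. ((z - z0)^n * (of_nat (l choose n) * z0 ^ (l - n))) *\<^sub>C A (k - l) v)"
    unfolding Ptaylor_def by (simp add: scaleC_sum_right scaleC_scaleC)
  also have "\<dots> = (\<Sum>l\<le>k. \<Sum>n\<le>k. ((z - z0)^n * (of_nat (l choose n) * z0 ^ (l - n))) *\<^sub>C A (k - l) v)"
    by (rule sum.swap)
  also have "\<dots> = (\<Sum>l\<le>k. z ^ l *\<^sub>C A (k - l) v)"
  proof (rule sum.cong[OF refl])
    fix l assume l: "l \<in> {..k}"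
    have "(\<Sum>n\<le>k. (z - z0)^n * (of_nat (l choose n) * z0 ^ (l - n)))
        = (\<Sum>n\<le>l. (z - z0)^n * (of_nat (l choose n) * z0 ^ (l - n)))"
      using l by (intro sum.mono_neutral_right) auto
    also have "\<dots> = ((z - z0) + z0) ^ l"
      unfolding binomial_ring by (intro sum.cong refl) (simp add: mult_ac)
    finally have "(\<Sum>n\<le>k. (z - z0)^n * (of_nat (l choose n) * z0 ^ (l - n))) = z ^ l" by simp
    then show "(\<Sum>n\<le>k. ((z - z0)^n * (of_nat (l choose n) * z0 ^ (l - n))) *\<^sub>C A (k - l) v)
        = z ^ l *\<^sub>C A (k - l) v"
      by (simp add: scaleC_sum_left[symmetric])
  qed
  finally show ?thesis by (simp add: Pop_def)
qed


lemma key: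
  fixes k :: nat
    and A :: "nat \<Rightarrow> 'v::complex_normed_vector \<Rightarrow> 'w::complex_normed_vector"
    and R :: "complex \<Rightarrow> 'w \<Rightarrow> 'v"
    and z0 :: complex and r :: real and d :: nat
    and Rm :: "int \<Rightarrow> 'w \<Rightarrow> 'v"
  assumes A_lin: "\<And>j. bounded_clinear (A j)"
    and r_pos: "r > 0"
    and inverse: "\<And>z. 0 < dist z z0 \<Longrightarrow> dist z z0 < r \<Longrightarrow>
          (\<forall>w. Pop k A z (R z w) = w) \<and> (\<forall>v. R z (Pop k A z v) = v)"
    and laurent: "\<And>z w. 0 < dist z z0 \<Longrightarrow> dist z z0 < r \<Longrightarrow>
          (\<lambda>n. (z - z0) ^ n *\<^sub>C Rm (int n - int d) w) sums ((z - z0) ^ d *\<^sub>C R z w)"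
  shows "(\<Sum>l\<le>k. if l \<le> s then Ptaylor k A z0 l (Rm (int s - int l - int d) w) else 0)
           = (if s = d then w else 0)"
proof -
  let ?T = "Ptaylor k A z0"
  define a where "a s = (\<Sum>l\<le>k. if l \<le> s then ?T l (Rm (int s - int l - int d) w) else 0)" for s
  have main: "(\<lambda>s. h^s *\<^sub>C a s) sums (h^d *\<^sub>C w)"
    if z: "0 < dist z z0" "dist z z0 < r" and h: "h = z - z0" for z h
  proof -
    define G where "G l s = (if l \<le> s then h^s *\<^sub>C ?T l (Rm (int s - int l - int d) w) else 0)" for l s
    have L0: "(\<lambda>n. h^n *\<^sub>C Rm (int n - int d) w) sums (h^d *\<^sub>C R z w)"
      using laurent[OF z] h by simp
    have GS: "G l sums (h^l *\<^sub>C ?T l (h^d *\<^sub>C R z w))" for l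
    proof -
      have bl: "bounded_linear (\<lambda>v. h^l *\<^sub>C ?T l v)"
        by (intro bounded_linear_compose[OF bounded_linear_scaleC] Ptaylor_bl A_lin)
      have 1: "(\<lambda>n. h^l *\<^sub>C ?T l (h^n *\<^sub>C Rm (int n - int d) w)) sums (h^l *\<^sub>C ?T l (h^d *\<^sub>C R z w))"
        by (rule bounded_linear.sums[OF bl L0])
      have 2: "(\<lambda>n. G l (n + l)) = (\<lambda>n. h^l *\<^sub>C ?T l (h^n *\<^sub>C Rm (int n - int d) w))"
        by (rule ext) (simp add: G_def Ptaylor_scaleC[OF A_lin] scaleC_scaleC power_add mult.commute)
      have "(\<lambda>n. G l (n + l)) sums (h^l *\<^sub>C ?T l (h^d *\<^sub>C R z w))" using 1 2 by simp
      then show ?thesis by (subst (asm) sums_zero_iff_shift) (auto simp: G_def)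
    qed
    have "(\<lambda>s. \<Sum>l\<le>k. G l s) sums (\<Sum>l\<le>k. h^l *\<^sub>C ?T l (h^d *\<^sub>C R z w))"
      by (rule sums_sum) (rule GS)
    moreover have "(\<Sum>l\<le>k. h^l *\<^sub>C ?T l (h^d *\<^sub>C R z w)) = h^d *\<^sub>C w"
    proof -
      have "(\<Sum>l\<le>k. h^l *\<^sub>C ?T l (h^d *\<^sub>C R z w)) = h^d *\<^sub>C (\<Sum>l\<le>k. h^l *\<^sub>C ?T l (R z w))"
        by (simp add: Ptaylor_scaleC[OF A_lin] scaleC_sum_right scaleC_scaleC mult.commute)
      also have "\<dots> = h^d *\<^sub>C Pop k A z (R z w)" using h by (simp add: Pop_expand[of k A z _ z0])
      also have "\<dots> = h^d *\<^sub>C w" using inverse[OF z] by simp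
      finally show ?thesis .
    qed
    moreover have "(\<lambda>s. \<Sum>l\<le>k. G l s) = (\<lambda>s. h^s *\<^sub>C a s)"
      by (rule ext) (simp add: G_def a_def scaleC_sum_right if_distrib cong: if_cong)
    ultimately show ?thesis by simp
  qed
  define b where "b s = a s - (if s = d then w else 0)" for s
  have "b s = 0"
  proof (rule powser_uniq0[OF r_pos])
    fix x :: real assume x: "0 < x" "x < r"
    let ?z = "z0 + complex_of_real x"
    have "dist ?z z0 = x" using x by (simp add: dist_norm)
    then have m: "(\<lambda>s. (complex_of_real x)^s *\<^sub>C a s) sums ((complex_of_real x)^d *\<^sub>C w)"
      using main[of ?z "complex_of_real x"] x by simp
    have m2: "(\<lambda>s. x^s *\<^sub>R a s) sums (x^d *\<^sub>R w)" using m by (simp add: scaleC_of_real_pow)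
    have m3: "(\<lambda>s. if s = d then x^s *\<^sub>R w else 0) sums (x^d *\<^sub>R w)"
      using sums_single[of d "\<lambda>s. x^s *\<^sub>R w"] by simp
    have "(\<lambda>s. x^s *\<^sub>R a s - (if s = d then x^s *\<^sub>R w else 0)) sums (x^d *\<^sub>R w - x^d *\<^sub>R w)"
      by (rule sums_diff[OF m2 m3])
    moreover have "(\<lambda>s. x^s *\<^sub>R a s - (if s = d then x^s *\<^sub>R w else 0))
        = (\<lambda>s. x^s *\<^sub>R (a s - (if s = d then w else 0)))"
      by (rule ext) (simp add: scaleR_diff_right)
    ultimately show "(\<lambda>s. x^s *\<^sub>R b s) sums 0" by (simp add: b_def)
  qed
  then show ?thesis by (simp add: a_def b_def)
qed


lemma Dt_iter: "(Dt ^^ n) u j = u (j + n)"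
  by (induction n arbitrary: j) (simp_all add: Dt_def)

lemma Dt_inv_iter: "(Dt_inv ^^ n) u j = (if n \<le> j then u (j - n) else 0)"
  by (induction n arbitrary: j) (auto simp: Dt_inv_def)

lemma Dt_pow_eq: "Dt_pow m c j = (if 0 \<le> int j + m then c (nat (int j + m)) else 0)"
proof (cases "0 \<le> m")
  case True
  then show ?thesis by (simp add: Dt_pow_def Dt_iter nat_add_distrib)
next
  case False
  then show ?thesis by (auto simp: Dt_pow_def Dt_inv_iter intro!: arg_cong[where f=c])
qed

theorem lemma3p10:
  fixes k :: nat
    and A :: "nat \<Rightarrow> 'v::complex_normed_vector \<Rightarrow> 'w::complex_normed_vector"
    and R :: "complex \<Rightarrow> 'w \<Rightarrow> 'v"
    and z0 :: complex and r :: real and d :: nat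
    and Rm :: "int \<Rightarrow> 'w \<Rightarrow> 'v"
    and c :: "nat \<Rightarrow> 'w"
  assumes A_lin: "\<And>j. bounded_clinear (A j)"
    and R_lin: "\<And>z. 0 < dist z z0 \<Longrightarrow> dist z z0 < r \<Longrightarrow> bounded_clinear (R z)"
    and Rm_lin: "\<And>m. bounded_clinear (Rm m)"
    and r_pos: "r > 0"
    and inverse: "\<And>z. 0 < dist z z0 \<Longrightarrow> dist z z0 < r \<Longrightarrow>
          (\<forall>w. Pop k A z (R z w) = w) \<and> (\<forall>v. R z (Pop k A z v) = v)"
    and laurent: "\<And>z w. 0 < dist z z0 \<Longrightarrow> dist z z0 < r \<Longrightarrow>
          (\<lambda>n. (z - z0) ^ n *\<^sub>C Rm (int n - int d) w) sums ((z - z0) ^ d *\<^sub>C R z w)"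
    and below: "\<And>m. m < - int d \<Longrightarrow> Rm m = (\<lambda>_. 0)"
    and pole_order: "d = 0 \<or> Rm (- int d) \<noteq> (\<lambda>_. 0)"
    and poly: "finite {j. c j \<noteq> 0}"
  shows "Pshift k A z0 (Qop d Rm c) = c"
proof
  fix j
  let ?T = "Ptaylor k A z0"
  obtain N where "{j. c j \<noteq> 0} \<subseteq> {..<N}" using finite_nat_bounded[OF poly] by blast
  then have N: "\<And>i. N \<le> i \<Longrightarrow> c i = 0" by fastforce
  define CC where "CC t = (if 0 \<le> t then c (nat t) else 0)" for t
  have CCN: "CC t = 0" if "int N \<le> t" for t
    using that N[of "nat t"] by (simp add: CC_def)
  have Rm0: "Rm m 0 = 0" for m using linear_0[OF bounded_linear.linear[OF bcl_bl[OF Rm_lin]]] .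
  have T0: "?T n 0 = 0" for n using linear_0[OF bounded_linear.linear[OF Ptaylor_bl[OF A_lin]]] .
  have Qop_eq: "Qop d Rm c i = (\<Sum>m\<in>{- int d..<int N}. Rm m (CC (int i + m)))" for i
  proof -
    let ?M = "{m. - int d \<le> m \<and> Dt_pow m c \<noteq> (\<lambda>_. 0)}"
    have sub: "?M \<subseteq> {- int d..<int N}"
    proof
      fix m assume m: "m \<in> ?M"
      have "m < int N"
      proof (rule ccontr)
        assume "\<not> m < int N"
        then have "Dt_pow m c = (\<lambda>_. 0)"
          by (intro ext) (auto simp: Dt_pow_eq intro!: N)
        then show False using m by simp
      qed
      then show "m \<in> {- int d..<int N}" using m by simp
    qed
    have "Qop d Rm c i = (\<Sum>m\<in>?M. Rm m (Dt_pow m c i))" by (simp add: Qop_def)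
    also have "\<dots> = (\<Sum>m\<in>{- int d..<int N}. Rm m (Dt_pow m c i))"
      by (rule sum.mono_neutral_left[OF _ sub]) (auto simp: Rm0)
    also have "\<dots> = (\<Sum>m\<in>{- int d..<int N}. Rm m (CC (int i + m)))"
      by (simp add: Dt_pow_eq CC_def)
    finally show ?thesis .
  qed
  define K where "K = k + d + N + 1"
  define F where "F n s = (if n \<le> s then ?T n (Rm (int s - int n - int d) (CC (int j + int s - int d))) else 0)" for n s
  have claim1: "?T n (Qop d Rm c (j + n)) = (\<Sum>s<K. F n s)" if n: "n \<le> k" for n
  proof -
    have "?T n (Qop d Rm c (j + n)) = (\<Sum>m\<in>{- int d..<int N}. ?T n (Rm m (CC (int (j + n) + m))))"
      by (simp add: Qop_eq linear_sum[OF bounded_linear.linear[OF Ptaylor_bl[OF A_lin]]])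
    also have "\<dots> = (\<Sum>s\<in>{n..<n+d+N}. F n s)"
    proof (rule sum.reindex_bij_witness[of _ "\<lambda>s. int s - int n - int d" "\<lambda>m. nat (m + int n + int d)"])
      fix m assume "m \<in> {- int d..<int N}"
      then show "int (nat (m + int n + int d)) - int n - int d = m"
        and "nat (m + int n + int d) \<in> {n..<n + d + N}"
        and "F n (nat (m + int n + int d)) = ?T n (Rm m (CC (int (j + n) + m)))"
        by (auto simp: F_def ac_simps)
    next
      fix s assume "s \<in> {n..<n + d + N}"
      then show "nat (int s - int n - int d + int n + int d) = s"
        and "int s - int n - int d \<in> {- int d..<int N}" by auto
    qed
    also have "\<dots> = (\<Sum>s<K. F n s)"
    proof (rule sum.mono_neutral_left)
      show "{n..<n + d + N} \<subseteq> {..<K}" using n by (auto simp: K_def)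
      show "\<forall>s\<in>{..<K} - {n..<n + d + N}. F n s = 0"
        by (auto simp: F_def CCN Rm0 T0)
    qed auto
    finally show ?thesis .
  qed
  have "Pshift k A z0 (Qop d Rm c) j = (\<Sum>n\<le>k. ?T n (Qop d Rm c (j + n)))"
    by (simp add: Pshift_def Dt_iter)
  also have "\<dots> = (\<Sum>n\<le>k. \<Sum>s<K. F n s)" by (rule sum.cong) (auto simp: claim1)
  also have "\<dots> = (\<Sum>s<K. \<Sum>n\<le>k. F n s)" by (rule sum.swap)
  also have "\<dots> = (\<Sum>s<K. if s = d then CC (int j + int s - int d) else 0)"
    unfolding F_def
    by (rule sum.cong[OF refl], rule key[OF A_lin r_pos inverse laurent])
  also have "\<dots> = CC (int j)" using sum.delta[of "{..<K}" d "\<lambda>s. CC (int j + int s - int d)"]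
    by (simp add: K_def)
  also have "\<dots> = c j" by (simp add: CC_def)
  finally show "Pshift k A z0 (Qop d Rm c) j = c j" .
qed

end
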